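(* Let $S>0$, $I\ge1$, $N_1,\dots,N_I$ positive integers and $\theta_1>\dots>\theta_I>0$. Let $\lambda(k)=\Big(\frac{\sum_{i=1}^k N_i\sqrt{\theta_i}}{S+\sum_{i=1}^k N_i}\Big)^2$, $K=\max\{k\in\{1,\dots,I\}:\theta_k>\lambda(k)\}$, $\lambda^*=\lambda(K)$, and for $i\le K$ let $p^*_i=\sqrt{\theta_i\lambda^*}$ and $s^*_i=\sqrt{\theta_i/\lambda^*}-1$ (the optimal complete-information differentiated prices and allocations). For each $q\in\{1,\dots,K-1\}$ the equation $$t^2\ln t-(t^2-1)+\frac{t\sum_{k=1}^{q}N_k+N_{q+1}}{S+\sum_{k=1}^{K}N_k}(t-1)=0$$ has a unique solution $t_q$ in $t>1$. Moreover, if $\sqrt{\theta_q/\theta_{q+1}}\ge t_q$ for all $q=1,\dots,K-1$, then there exist quantity thresholds $s^1_{th}>s^2_{th}>\dots>s^{K-1}_{th}>0$ such that, under the quantity-based price menu $p(s)=p^*_q$ for $s^q_{th}<s\le s^{q-1}_{th}$ ($q=1,\dots,K$, with $s^0_{th}=+\infty$, $s^K_{th}=0$), for every $i\in\{1,\dots,K\}$ the quantity $s^*_i$ maximizes a group-$i$ user's surplus $\theta_i\ln(1+s)-p(s)s$ over $s\ge0$ (with surplus $0$ at $s=0$) and is charged unit price $p(s^*_i)=p^*_i$; consequently the menu attains the same revenue $\sum_{i=1}^K N_ip^*_is^*_i$ as optimal complete price differentiation under complete information.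
   Context: Group $i$ consists of $N_i$ users, each with utility $\theta_i\ln(1+s)$. Under incomplete information the provider (with total resource $S$) does not know which group each user belongs to; it publishes one menu in which the unit price depends on the purchased quantity, and each user freely chooses a quantity to maximize utility minus payment $p(s)s$. *)

theory Defs
  imports Complex_Main
begin

text \<open>Groups are indexed 1..I; N i is the number of users of group i, th i = theta_i.\<close>

definition lam :: "real \<Rightarrow> (nat \<Rightarrow> nat) \<Rightarrow> (nat \<Rightarrow> real) \<Rightarrow> nat \<Rightarrow> real" where
  "lam S N th k = ((\<Sum>i=1..k. real (N i) * sqrt (th i)) / (S + (\<Sum>i=1..k. real (N i)))) ^ 2"

definition effK :: "real \<Rightarrow> nat \<Rightarrow> (nat \<Rightarrow> nat) \<Rightarrow> (nat \<Rightarrow> real) \<Rightarrow> nat" where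
  "effK S I N th = Max {k \<in> {1..I}. th k > lam S N th k}"

definition lamstar :: "real \<Rightarrow> nat \<Rightarrow> (nat \<Rightarrow> nat) \<Rightarrow> (nat \<Rightarrow> real) \<Rightarrow> real" where
  "lamstar S I N th = lam S N th (effK S I N th)"

definition pstar :: "real \<Rightarrow> nat \<Rightarrow> (nat \<Rightarrow> nat) \<Rightarrow> (nat \<Rightarrow> real) \<Rightarrow> nat \<Rightarrow> real" where
  "pstar S I N th i = sqrt (th i * lamstar S I N th)"

definition sstar :: "real \<Rightarrow> nat \<Rightarrow> (nat \<Rightarrow> nat) \<Rightarrow> (nat \<Rightarrow> real) \<Rightarrow> nat \<Rightarrow> real" where
  "sstar S I N th i = sqrt (th i / lamstar S I N th) - 1"

definition threq :: "real \<Rightarrow> (nat \<Rightarrow> nat) \<Rightarrow> nat \<Rightarrow> nat \<Rightarrow> real \<Rightarrow> real" where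
  "threq S N K q t = t^2 * ln t - (t^2 - 1)
     + (t * (\<Sum>k=1..q. real (N k)) + real (N (q+1))) / (S + (\<Sum>k=1..K. real (N k))) * (t - 1)"

definition tq :: "real \<Rightarrow> (nat \<Rightarrow> nat) \<Rightarrow> nat \<Rightarrow> nat \<Rightarrow> real" where
  "tq S N K q = (THE t. t > 1 \<and> threq S N K q t = 0)"

text \<open>Quantity-based price menu: thresholds sth 1 > ... > sth (K-1) > 0, with
  sth 0 = +infinity and sth K = 0; for s^q_th < s \<le> s^(q-1)_th the unit price is price q.
  At s = 0 the payment p(s)*s is 0 whatever value is returned.\<close>
definition menu_price :: "nat \<Rightarrow> (nat \<Rightarrow> real) \<Rightarrow> (nat \<Rightarrow> real) \<Rightarrow> real \<Rightarrow> real" where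
  "menu_price K sth price s =
     price (THE q. q \<in> {1..K} \<and> (q = K \<or> sth q < s) \<and> (q = 1 \<or> s \<le> sth (q - 1)))"

definition surplus :: "real \<Rightarrow> (real \<Rightarrow> real) \<Rightarrow> real \<Rightarrow> real" where
  "surplus thi p s = thi * ln (1 + s) - p s * s"

end

theory Submission imports Defs begin


definition psi :: "real \<Rightarrow> real \<Rightarrow> real \<Rightarrow> real" where
  "psi a b t = t^2 * ln t - (t^2 - 1) + (a*t+b)*(t-1)"

lemma psi_deriv: "t > 0 \<Longrightarrow> DERIV (psi a b) t :> 2*t*ln t - t + 2*a*t - a + b"
  unfolding psi_def
  by (auto intro!: derivative_eq_intros simp: field_simps power2_eq_square)

lemma psi_deriv2: "(t::real) > 0 \<Longrightarrow> DERIV (\<lambda>t. 2*t*ln t - t + 2*a*t - a + b) t :> 2*ln t + 1 + 2*a"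
  by (auto intro!: derivative_eq_intros simp: field_simps)

lemma psi_one: "psi a b 1 = 0" by (simp add: psi_def)

lemma psi_three: assumes "a \<ge> 0" "1 < u" "u < v" "psi a b u = 0" "psi a b v = 0" shows False
proof -
  define d where "d = (\<lambda>t. 2*t*ln t - t + 2*a*t - a + b)"
  obtain z1 where z1: "1 < z1" "z1 < u" "psi a b u - psi a b 1 = (u - 1) * d z1"
    using MVT2[of 1 u "psi a b" d] assms psi_deriv unfolding d_def by force
  obtain z2 where z2: "u < z2" "z2 < v" "psi a b v - psi a b u = (v - u) * d z2"
    using MVT2[of u v "psi a b" d] assms psi_deriv unfolding d_def by force
  have "d z1 = 0" using z1 assms psi_one by simp
  moreover have "d z2 = 0" using z2 assms by simp
  moreover obtain z3 where z3: "z1 < z3" "z3 < z2" "d z2 - d z1 = (z2 - z1) * (2*ln z3 + 1 + 2*a)"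
    using MVT2[of z1 z2 d "\<lambda>t. 2*ln t + 1 + 2*a"] z1 z2 psi_deriv2 unfolding d_def by force
  moreover have "ln z3 > 0" using z1 z3 by simp
  ultimately show False using z1 z2 assms(1) by (simp add: mult_pos_pos)
qed

lemma psi_cont: "t > 0 \<Longrightarrow> isCont (psi a b) t"
  using psi_deriv DERIV_isCont by blast

lemma psi_big: assumes "a \<ge> 0" "b \<ge> 0" "t \<ge> exp 1" shows "psi a b t > 0"
proof -
  have t1: "t > 1" using assms(3) by (meson less_le_trans one_less_exp_iff zero_less_one)
  have "ln t \<ge> 1" using assms(3) t1 by (metis ln_exp ln_le_cancel_iff exp_gt_zero less_trans zero_less_one)
  hence "t^2 * ln t \<ge> t^2 * 1" by (intro mult_left_mono) auto
  moreover have "(a*t+b)*(t-1) \<ge> 0" using assms t1 by simp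
  ultimately show ?thesis unfolding psi_def by linarith
qed

lemma psi_exists: assumes "a \<ge> 0" "b \<ge> 0" "a + b < 1" shows "\<exists>t>1. psi a b t = 0"
proof -
  obtain d where d: "d > 0" "\<forall>h>0. h < d \<longrightarrow> psi a b 1 > psi a b (1 + h)"
    using DERIV_neg_dec_right[OF psi_deriv[of 1 a b]] assms by auto
  define h where "h = min (d/2) (1/2)"
  have e: "exp (1::real) \<ge> 2" using exp_ge_add_one_self[of "1::real"] by simp
  have h: "h > 0" "h < d" "1 + h \<le> exp 1" using d e unfolding h_def by auto
  have neg: "psi a b (1+h) < 0" using d h psi_one by metis
  have pos: "psi a b (exp 1) > 0" using psi_big assms by simp
  obtain t where t: "1+h \<le> t" "t \<le> exp 1" "psi a b t = 0"
    using IVT[of "psi a b" "1+h" 0 "exp 1"] neg pos h psi_cont by force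
  thus ?thesis using h by (intro exI[of _ t]) auto
qed

lemma psi_beyond: assumes "a \<ge> 0" "b \<ge> 0" "1 < t1" "t1 \<le> t" "psi a b t1 \<ge> 0" shows "psi a b t \<ge> 0"
proof (rule ccontr)
  assume neg: "\<not> psi a b t \<ge> 0"
  hence lt: "t1 < t" using assms by (cases "t1 = t") auto
  have te: "t < exp 1" using psi_big[of a b t] assms neg by force
  obtain r where r: "t \<le> r" "r \<le> exp 1" "psi a b r = 0"
    using IVT[of "psi a b" t 0 "exp 1"] neg te psi_cont assms lt psi_big[of a b "exp 1"] by force
  obtain r' where r': "t1 \<le> r'" "r' \<le> t" "psi a b r' = 0"
    using IVT2[of "psi a b" t 0 t1] neg assms lt psi_cont by force
  have "r' < r" using r r' neg by (cases "r' = t"; cases "r = t") auto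
  thus False using psi_three[of a r' r b] r r' assms by auto
qed

lemma psi_unique: assumes "a \<ge> 0" "b \<ge> 0" "a + b < 1" shows "\<exists>!t. t > 1 \<and> psi a b t = 0"
proof -
  obtain t where "t > 1" "psi a b t = 0" using psi_exists assms by blast
  moreover have "\<And>u. u > 1 \<Longrightarrow> psi a b u = 0 \<Longrightarrow> u = t"
    by (metis assms(1) calculation linorder_neqE_linordered_idom psi_three)
  ultimately show ?thesis by blast
qed



lemma menu_eq:
  assumes dec: "\<And>q r. 1 \<le> q \<Longrightarrow> q < r \<Longrightarrow> r \<le> K - 1 \<Longrightarrow> sth q > sth r"
    and j: "j \<in> {1..K}" "j = K \<or> sth j < s" "j = 1 \<or> s \<le> sth (j - 1)"
  shows "menu_price K sth price s = price j"
proof -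
  have "(THE q. q \<in> {1..K} \<and> (q = K \<or> sth q < s) \<and> (q = 1 \<or> s \<le> sth (q - 1))) = j"
  proof (rule the_equality)
    show "j \<in> {1..K} \<and> (j = K \<or> sth j < s) \<and> (j = 1 \<or> s \<le> sth (j - 1))" using j by blast
  next
    fix q assume q: "q \<in> {1..K} \<and> (q = K \<or> sth q < s) \<and> (q = 1 \<or> s \<le> sth (q - 1))"
    have "\<not> q < j"
    proof
      assume "q < j"
      hence "sth q < s" "s \<le> sth (j - 1)" using q j by auto
      moreover have "sth (j - 1) \<le> sth q"
      proof (cases "q = j - 1")
        case False
        hence "q < j - 1" "j - 1 \<le> K - 1" using \<open>q < j\<close> j(1) by auto
        thus ?thesis using dec[of q "j - 1"] q by auto
      qed simp
      ultimately show False by linarith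
    qed
    moreover have "\<not> j < q"
    proof
      assume "j < q"
      hence "sth j < s" "s \<le> sth (q - 1)" using q j by auto
      moreover have "sth (q - 1) \<le> sth j"
      proof (cases "j = q - 1")
        case False
        hence "j < q - 1" "q - 1 \<le> K - 1" using \<open>j < q\<close> q by auto
        thus ?thesis using dec[of j "q - 1"] j by auto
      qed simp
      ultimately show False by linarith
    qed
    ultimately show "q = j" by simp
  qed
  thus ?thesis unfolding menu_price_def by simp
qed

lemma menu_ex:
  fixes K :: nat and sth :: "nat \<Rightarrow> real"
  assumes "K \<ge> 1"
  shows "\<exists>j\<in>{1..K}. (j = K \<or> sth j < s) \<and> (j = 1 \<or> s \<le> sth (j - 1))"
proof -
  define J where "J = {j\<in>{1..K}. j = 1 \<or> s \<le> sth (j - 1)}"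
  have "J \<subseteq> {1..K}" unfolding J_def by auto
  hence fin: "finite J" "1 \<in> J" using assms finite_subset[of J "{1..K}"] unfolding J_def by auto
  define j where "j = Max J"
  have jJ: "j \<in> J" using fin unfolding j_def by (intro Max_in) auto
  have "j = K \<or> sth j < s"
  proof (rule ccontr)
    assume "\<not> (j = K \<or> sth j < s)"
    hence "j + 1 \<in> J" using jJ unfolding J_def by auto
    hence "j + 1 \<le> j" using fin unfolding j_def by (intro Max_ge) auto
    thus False by simp
  qed
  thus ?thesis using jJ unfolding J_def by blast
qed

lemma conc:
  fixes A y0 s P :: real
  assumes "A \<ge> 0" "y0 > 0" "s > -1" "(s \<le> y0 - 1 \<and> A / y0 \<ge> P) \<or> P = A / y0"
  shows "A * ln (1 + s) - P * s \<le> A * ln y0 - P * (y0 - 1)"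
proof -
  have "ln (1 + s) - ln y0 \<le> ((1 + s) - y0) / y0" using ln_diff_le[of "1+s" y0] assms by simp
  hence "A * (ln (1 + s) - ln y0) \<le> A * (((1 + s) - y0) / y0)"
    using mult_left_mono assms(1) by blast
  moreover have "A * (((1 + s) - y0) / y0) = (A / y0) * (s - (y0 - 1))" by (simp add: field_simps)
  ultimately have "A * ln (1 + s) \<le> A * ln y0 + (A / y0) * (s - (y0 - 1))"
    by (simp add: algebra_simps)
  moreover have "(A / y0) * (s - (y0 - 1)) \<le> P * (s - (y0 - 1))"
    using assms(4) mult_right_mono_neg[of P "A/y0" "s - (y0 - 1)"] by auto
  ultimately show ?thesis by (simp add: algebra_simps)
qed

lemma key_norm:
  fixes w z :: real
  assumes "w > 1" "z \<ge> w" "psi 0 (1/w) (z/w) \<ge> 0"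
  shows "z^2 * ln w - w * (w - 1) \<le> z^2 * ln z - z * (z - 1)"
proof -
  have lz: "ln z = ln (z/w) + ln w" using assms by (simp add: ln_div)
  have "w^2 * psi 0 (1/w) (z/w) = z^2 * ln (z/w) - z^2 + w^2 + z - w"
    using assms unfolding psi_def by (simp add: field_simps power2_eq_square)
  moreover have "w^2 * psi 0 (1/w) (z/w) \<ge> 0" using assms by simp
  ultimately show ?thesis unfolding lz by (simp add: algebra_simps power2_eq_square)
qed


theorem theorem6:
  fixes S :: real and I :: nat and N :: "nat \<Rightarrow> nat" and th :: "nat \<Rightarrow> real"
  assumes S_pos: "S > 0"
    and I_ge: "I \<ge> 1"
    and N_pos: "\<forall>i\<in>{1..I}. N i > 0"
    and th_dec: "\<forall>i\<in>{1..I}. \<forall>j\<in>{1..I}. i < j \<longrightarrow> th i > th j"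
    and th_pos: "th I > 0"
  shows "(\<forall>q\<in>{1..effK S I N th - 1}.
            \<exists>!t. t > 1 \<and> threq S N (effK S I N th) q t = 0)
       \<and> ((\<forall>q\<in>{1..effK S I N th - 1}.
              sqrt (th q / th (q+1)) \<ge> tq S N (effK S I N th) q)
          \<longrightarrow> (\<exists>sth :: nat \<Rightarrow> real.
                 (\<forall>q\<in>{1..effK S I N th - 1}. \<forall>r\<in>{1..effK S I N th - 1}. q < r \<longrightarrow> sth q > sth r)
               \<and> (\<forall>q\<in>{1..effK S I N th - 1}. sth q > 0)
               \<and> (let K = effK S I N th;
                      p = menu_price K sth (pstar S I N th) in
                    (\<forall>i\<in>{1..K}.
                        sstar S I N th i \<ge> 0
                      \<and> (\<forall>s\<ge>0. surplus (th i) p s \<le> surplus (th i) p (sstar S I N th i))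
                      \<and> p (sstar S I N th i) = pstar S I N th i)
                  \<and> (\<Sum>i=1..K. real (N i) * p (sstar S I N th i) * sstar S I N th i)
                    = (\<Sum>i=1..K. real (N i) * pstar S I N th i * sstar S I N th i))))"
proof -
  have thpos: "\<And>i. i \<in> {1..I} \<Longrightarrow> th i > 0"
    using th_dec th_pos I_ge by (metis atLeastAtMost_iff le_less less_trans order_refl)
  have thnn: "\<And>i. 1 \<le> i \<Longrightarrow> i \<le> I \<Longrightarrow> th i \<ge> 0"
    using thpos by (simp add: less_imp_le)
  have thdec: "\<And>i j. 1 \<le> i \<Longrightarrow> i < j \<Longrightarrow> j \<le> I \<Longrightarrow> th i > th j"
    using th_dec by auto
  define Kset where "Kset = {k \<in> {1..I}. th k > lam S N th k}"
  define K where "K = effK S I N th"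
  have one_in: "1 \<in> Kset"
  proof -
    define n where "n = real (N 1)"
    define r where "r = sqrt (th 1)"
    have n: "n > 0" using N_pos I_ge unfolding n_def by auto
    have r: "r > 0" using thpos I_ge unfolding r_def by auto
    have "n * r / (S + n) < r" using n r S_pos by (simp add: field_simps)
    moreover have "n * r / (S + n) \<ge> 0" using n r S_pos by simp
    ultimately have "(n * r / (S + n))^2 < r^2" by (simp add: power_strict_mono)
    moreover have "r^2 = th 1" using thpos[of 1] I_ge unfolding r_def by (simp add: less_imp_le)
    moreover have "lam S N th 1 = (n * r / (S + n))^2" unfolding lam_def n_def r_def by simp
    ultimately show ?thesis unfolding Kset_def using I_ge by auto
  qed
  have finK: "finite Kset" unfolding Kset_def by auto
  have KK: "K \<in> Kset" unfolding K_def effK_def Kset_def[symmetric] using finK one_in by (intro Max_in) auto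
  have K1: "K \<ge> 1" "K \<le> I" and thK: "th K > lam S N th K" using KK unfolding Kset_def by auto
  define D where "D = S + (\<Sum>k=1..K. real (N k))"
  define SK where "SK = (\<Sum>i=1..K. real (N i) * sqrt (th i))"
  define lm where "lm = lam S N th K"
  have Dpos: "D > 0" unfolding D_def using S_pos by (simp add: sum_nonneg add_pos_nonneg)
  have SKpos: "SK > 0"
  proof -
    have "real (N 1) * sqrt (th 1) \<le> SK" unfolding SK_def
      using K1 thnn by (intro member_le_sum) auto
    moreover have "real (N 1) * sqrt (th 1) > 0" using N_pos thpos I_ge by auto
    ultimately show ?thesis by linarith
  qed
  have lm_eq: "lm = (SK / D)^2" unfolding lm_def lam_def SK_def D_def by simp
  have lmpos: "lm > 0" using lm_eq SKpos Dpos by simp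
  have sqlm: "sqrt lm = SK / D" using lm_eq SKpos Dpos by simp
  have lamstar_eq: "lamstar S I N th = lm" unfolding lamstar_def lm_def K_def by simp
  define x where "x = (\<lambda>i. sqrt (th i / lm))"
  have sstar_eq: "\<And>i. sstar S I N th i = x i - 1" unfolding sstar_def x_def lamstar_eq by simp
  have pstar_eq: "\<And>i. i \<in> {1..I} \<Longrightarrow> pstar S I N th i = lm * x i"
  proof -
    fix i assume "i \<in> {1..I}"
    hence "th i \<ge> 0" using thpos by fastforce
    have "th i * lm = (th i / lm) * lm^2" using lmpos by (simp add: power2_eq_square)
    hence "sqrt (th i * lm) = sqrt (th i / lm) * sqrt (lm^2)" by (metis real_sqrt_mult)
    hence "sqrt (th i * lm) = sqrt (th i / lm) * lm" using lmpos by simp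
    thus "pstar S I N th i = lm * x i" unfolding pstar_def lamstar_eq x_def by simp
  qed
  have th_eq: "\<And>i. i \<in> {1..I} \<Longrightarrow> th i = lm * (x i)^2"
  proof -
    fix i assume "i \<in> {1..I}"
    hence "th i \<ge> 0" using thpos by fastforce
    thus "th i = lm * (x i)^2" unfolding x_def using lmpos by simp
  qed
  have thKlm: "th K > lm" using thK unfolding lm_def .
  have xgt1: "\<And>i. i \<in> {1..K} \<Longrightarrow> x i > 1"
  proof -
    fix i assume i: "i \<in> {1..K}"
    have "th i \<ge> th K" using thdec[of i K] i K1 by (cases "i = K") auto
    hence "th i / lm > 1" using thKlm lmpos by simp
    thus "x i > 1" unfolding x_def by simp
  qed
  have xdec: "\<And>i j. 1 \<le> i \<Longrightarrow> i < j \<Longrightarrow> j \<le> I \<Longrightarrow> x i > x j"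
  proof -
    fix i j assume ij: "1 \<le> i" "i < j" "j \<le> I"
    hence "th i > th j" by (rule thdec)
    hence "th i / lm > th j / lm" using lmpos by (simp add: divide_strict_right_mono)
    thus "x i > x j" unfolding x_def by simp
  qed
  define aa where "aa = (\<lambda>q. (\<Sum>k=1..q. real (N k)) / D)"
  define bb where "bb = (\<lambda>q. real (N (q+1)) / D)"
  have threq_psi: "\<And>q t. threq S N K q t = psi (aa q) (bb q) t"
    unfolding threq_def psi_def aa_def bb_def D_def[symmetric] by (simp add: add_divide_distrib)
  have ab: "\<And>q. q \<in> {1..K-1} \<Longrightarrow> aa q \<ge> 0 \<and> bb q \<ge> 0 \<and> aa q + bb q < 1"
  proof -
    fix q assume q: "q \<in> {1..K-1}"
    have "aa q + bb q = (\<Sum>k=1..Suc q. real (N k)) / D" unfolding aa_def bb_def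
      by (simp add: add_divide_distrib)
    also have "(\<Sum>k=1..Suc q. real (N k)) \<le> (\<Sum>k=1..K. real (N k))"
      using q by (intro sum_mono2) auto
    hence "(\<Sum>k=1..Suc q. real (N k)) / D < 1" using Dpos S_pos unfolding D_def by simp
    finally show "aa q \<ge> 0 \<and> bb q \<ge> 0 \<and> aa q + bb q < 1" unfolding aa_def bb_def
      using Dpos by (simp add: sum_nonneg)
  qed
  have conj1: "\<forall>q\<in>{1..K - 1}. \<exists>!t. t > 1 \<and> threq S N K q t = 0"
    unfolding threq_psi using ab psi_unique by blast
  have tq_prop: "\<And>q. q \<in> {1..K-1} \<Longrightarrow> tq S N K q > 1 \<and> psi (aa q) (bb q) (tq S N K q) = 0"
  proof -
    fix q assume q: "q \<in> {1..K-1}"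
    have "\<exists>!t. t > 1 \<and> threq S N K q t = 0" using conj1 q by blast
    from theI'[OF this] show "tq S N K q > 1 \<and> psi (aa q) (bb q) (tq S N K q) = 0"
      unfolding tq_def threq_psi .
  qed
  have conj2: "(\<forall>q\<in>{1..K - 1}. sqrt (th q / th (q+1)) \<ge> tq S N K q)
          \<longrightarrow> (\<exists>sth :: nat \<Rightarrow> real.
                 (\<forall>q\<in>{1..K - 1}. \<forall>r\<in>{1..K - 1}. q < r \<longrightarrow> sth q > sth r)
               \<and> (\<forall>q\<in>{1..K - 1}. sth q > 0)
               \<and> (let p = menu_price K sth (pstar S I N th) in
                    (\<forall>i\<in>{1..K}.
                        sstar S I N th i \<ge> 0
                      \<and> (\<forall>s\<ge>0. surplus (th i) p s \<le> surplus (th i) p (sstar S I N th i))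
                      \<and> p (sstar S I N th i) = pstar S I N th i)
                  \<and> (\<Sum>i=1..K. real (N i) * p (sstar S I N th i) * sstar S I N th i)
                    = (\<Sum>i=1..K. real (N i) * pstar S I N th i * sstar S I N th i)))"
  proof
    assume hyp: "\<forall>q\<in>{1..K - 1}. sqrt (th q / th (q+1)) \<ge> tq S N K q"
    have key: "\<And>i j. 1 \<le> i \<Longrightarrow> i < j \<Longrightarrow> j \<le> K \<Longrightarrow>
        th i * ln (x j) - (lm * x j) * (x j - 1) \<le> th i * ln (x i) - (lm * x i) * (x i - 1)"
    proof -
      fix i j assume ij: "1 \<le> i" "i < j" "j \<le> K"
      define q where "q = j - 1"
      have jq: "j = Suc q" using ij unfolding q_def by auto
      have q: "q \<in> {1..K-1}" using ij unfolding q_def by auto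
      have iq: "i \<le> q" using ij unfolding q_def by auto
      have qI: "q \<in> {1..I}" "j \<in> {1..I}" "i \<in> {1..I}" using q ij K1 jq by auto
      have thq: "th q > 0" "th j > 0" using thpos qI by auto
      define A where "A = (\<Sum>k=1..q. real (N k))"
      define sq where "sq = sqrt (th q)"
      define sj where "sj = sqrt (th j)"
      have sqp: "sq > 0" "sj > 0" using thq unfolding sq_def sj_def by auto
      define t1 where "t1 = sqrt (th q / th (q+1))"
      have t1eq: "t1 = sq / sj" unfolding t1_def sq_def sj_def jq by (simp add: real_sqrt_divide)
      have t1x: "t1 = x q / x j" unfolding t1eq sq_def sj_def x_def using lmpos
        by (simp add: real_sqrt_divide)
      have tqp: "tq S N K q > 1" "psi (aa q) (bb q) (tq S N K q) = 0" using tq_prop[OF q] by auto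
      have t1ge: "t1 \<ge> tq S N K q" using hyp q unfolding t1_def by auto
      have abq: "aa q \<ge> 0" "bb q \<ge> 0" using ab[OF q] by auto
      have ps1: "psi (aa q) (bb q) t1 \<ge> 0"
        using psi_beyond[of "aa q" "bb q" "tq S N K q" t1] abq tqp t1ge by auto
      have t1gt: "t1 > 1" using tqp t1ge by linarith
      have sumA: "(\<Sum>k=1..q. real (N k) * sqrt (th k)) \<ge> A * sq"
      proof -
        have "(\<Sum>k=1..q. real (N k) * sq) \<le> (\<Sum>k=1..q. real (N k) * sqrt (th k))"
        proof (rule sum_mono)
          fix k assume k: "k \<in> {1..q}"
          have "th k \<ge> th q" using thdec[of k q] k qI by (cases "k = q") auto
          hence "sq \<le> sqrt (th k)" unfolding sq_def by simp
          thus "real (N k) * sq \<le> real (N k) * sqrt (th k)" by (simp add: mult_left_mono)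
        qed
        thus ?thesis unfolding A_def by (simp add: sum_distrib_right)
      qed
      have "(\<Sum>k=1..j. real (N k) * sqrt (th k)) \<le> SK"
        unfolding SK_def using ij thnn K1 by (intro sum_mono2) auto
      moreover have "(\<Sum>k=1..j. real (N k) * sqrt (th k)) = (\<Sum>k=1..q. real (N k) * sqrt (th k)) + real (N j) * sj"
        unfolding jq sj_def by simp
      ultimately have SKge: "A * sq + real (N j) * sj \<le> SK" using sumA by linarith
      have xj: "x j = sj / sqrt lm" unfolding x_def sj_def by (simp add: real_sqrt_divide)
      have cge: "1 / x j \<ge> aa q * t1 + bb q"
      proof -
        have "aa q * t1 + bb q = (A * sq + real (N j) * sj) / (D * sj)"
          unfolding aa_def bb_def A_def[symmetric] t1eq using sqp Dpos jq
          by (simp add: field_simps)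
        also have "\<dots> \<le> SK / (D * sj)" using SKge sqp Dpos by (simp add: divide_right_mono)
        also have "\<dots> = 1 / x j" unfolding xj sqlm using sqp Dpos by simp
        finally show ?thesis .
      qed
      have "psi 0 (1 / x j) t1 - psi (aa q) (bb q) t1 = (1 / x j - (aa q * t1 + bb q)) * (t1 - 1)"
        unfolding psi_def by (simp add: algebra_simps)
      moreover have "(1 / x j - (aa q * t1 + bb q)) * (t1 - 1) \<ge> 0" using cge t1gt by simp
      ultimately have ps2: "psi 0 (1 / x j) t1 \<ge> 0" using ps1 by linarith
      have xj1: "x j > 1" using xgt1 ij by auto
      have xiq: "x i \<ge> x q" using xdec[of i q] iq ij qI by (cases "i = q") auto
      have "t1 \<le> x i / x j" unfolding t1x using xiq xj1 by (simp add: divide_right_mono)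
      hence ps3: "psi 0 (1 / x j) (x i / x j) \<ge> 0"
        using psi_beyond[of 0 "1 / x j" t1 "x i / x j"] ps2 t1gt xj1 by auto
      have xij: "x i \<ge> x j" using xdec[of i j] ij K1 by auto
      have kn: "(x i)^2 * ln (x j) - x j * (x j - 1) \<le> (x i)^2 * ln (x i) - x i * (x i - 1)"
        using key_norm[OF xj1 xij ps3] .
      have "lm * ((x i)^2 * ln (x j) - x j * (x j - 1)) \<le> lm * ((x i)^2 * ln (x i) - x i * (x i - 1))"
        using kn lmpos by (simp add: mult_left_mono)
      thus "th i * ln (x j) - (lm * x j) * (x j - 1) \<le> th i * ln (x i) - (lm * x i) * (x i - 1)"
        using th_eq[OF qI(3)] by (simp add: algebra_simps)
    qed
    define sth where "sth = (\<lambda>q. x (q+1) - 1)"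
    define p where "p = menu_price K sth (pstar S I N th)"
    have sth_dec: "\<And>q r. 1 \<le> q \<Longrightarrow> q < r \<Longrightarrow> r \<le> K - 1 \<Longrightarrow> sth q > sth r"
      unfolding sth_def using xdec K1 by fastforce
    have sth_pos: "\<forall>q\<in>{1..K - 1}. sth q > 0" unfolding sth_def using xgt1 by fastforce
    have p_own: "\<And>i. i \<in> {1..K} \<Longrightarrow> p (x i - 1) = lm * x i"
    proof -
      fix i assume i: "i \<in> {1..K}"
      have "p (x i - 1) = pstar S I N th i" unfolding p_def
      proof (rule menu_eq[OF sth_dec])
        show "i = K \<or> sth i < x i - 1"
        proof (cases "i = K")
          case False thus ?thesis using xdec[of i "i+1"] i K1 unfolding sth_def by auto
        qed simp
        show "i = 1 \<or> x i - 1 \<le> sth (i - 1)" unfolding sth_def using i by (cases i) auto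
      qed (use i in auto)
      thus "p (x i - 1) = lm * x i" using pstar_eq i K1 by auto
    qed
    have opt: "\<And>i s. i \<in> {1..K} \<Longrightarrow> s \<ge> 0 \<Longrightarrow>
        surplus (th i) p s \<le> th i * ln (x i) - (lm * x i) * (x i - 1)"
    proof -
      fix i s assume i: "i \<in> {1..K}" and s: "(s::real) \<ge> 0"
      have iI: "i \<in> {1..I}" using i K1 by auto
      have xi: "x i > 1" using xgt1 i .
      have thi: "th i = lm * (x i)^2" using th_eq iI .
      have thi0: "th i \<ge> 0" using thnn iI by auto
      have own_eq: "th i / x i = lm * x i" using xi unfolding thi by (simp add: power2_eq_square)
      have own: "\<And>s'. s' \<ge> 0 \<Longrightarrow> th i * ln (1 + s') - (lm * x i) * s' \<le> th i * ln (x i) - (lm * x i) * (x i - 1)"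
        using conc[of "th i" "x i" _ "lm * x i"] thi0 xi own_eq by auto
      show "surplus (th i) p s \<le> th i * ln (x i) - (lm * x i) * (x i - 1)"
      proof (cases "s = 0")
        case True
        thus ?thesis using own[of 0] unfolding surplus_def by simp
      next
        case False
        obtain j where j: "j \<in> {1..K}" "j = K \<or> sth j < s" "j = 1 \<or> s \<le> sth (j - 1)"
          using menu_ex[of K sth s] K1 by blast
        have jI: "j \<in> {1..I}" using j K1 by auto
        have ps: "p s = lm * x j" unfolding p_def using menu_eq[OF sth_dec j] pstar_eq[OF jI] by simp
        have sur: "surplus (th i) p s = th i * ln (1 + s) - (lm * x j) * s" unfolding surplus_def ps by simp
        consider "j = i" | "j < i" | "i < j" by linarith
        thus ?thesis
        proof cases
          case 1 thus ?thesis using sur own[OF s] by simp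
        next
          case 2
          hence "x j > x i" using xdec[of j i] j iI by auto
          hence "(lm * x j) * s \<ge> (lm * x i) * s" using lmpos s by (simp add: mult_right_mono)
          thus ?thesis using sur own[OF s] by linarith
        next
          case 3
          have xj: "x j > 1" using xgt1 j(1) .
          have sle: "s \<le> x j - 1" using j(3) 3 i unfolding sth_def by (cases j) auto
          have "th i > th j" using thdec[of i j] 3 i j K1 by auto
          hence "th i / x j \<ge> lm * x j" using th_eq[OF jI] xj by (simp add: field_simps power2_eq_square)
          hence "th i * ln (1 + s) - (lm * x j) * s \<le> th i * ln (x j) - (lm * x j) * (x j - 1)"
            using conc[of "th i" "x j" s "lm * x j"] thi0 xj s sle by auto
          also have "\<dots> \<le> th i * ln (x i) - (lm * x i) * (x i - 1)"
            using key[of i j] i j 3 by auto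
          finally show ?thesis using sur by simp
        qed
      qed
    qed
    show "\<exists>sth :: nat \<Rightarrow> real.
                 (\<forall>q\<in>{1..K - 1}. \<forall>r\<in>{1..K - 1}. q < r \<longrightarrow> sth q > sth r)
               \<and> (\<forall>q\<in>{1..K - 1}. sth q > 0)
               \<and> (let p = menu_price K sth (pstar S I N th) in
                    (\<forall>i\<in>{1..K}.
                        sstar S I N th i \<ge> 0
                      \<and> (\<forall>s\<ge>0. surplus (th i) p s \<le> surplus (th i) p (sstar S I N th i))
                      \<and> p (sstar S I N th i) = pstar S I N th i)
                  \<and> (\<Sum>i=1..K. real (N i) * p (sstar S I N th i) * sstar S I N th i)
                    = (\<Sum>i=1..K. real (N i) * pstar S I N th i * sstar S I N th i))"
    proof (intro exI[of _ sth] conjI)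
      show "\<forall>q\<in>{1..K - 1}. \<forall>r\<in>{1..K - 1}. q < r \<longrightarrow> sth q > sth r" using sth_dec by auto
      show "\<forall>q\<in>{1..K - 1}. sth q > 0" by (rule sth_pos)
      have pi: "\<And>i. i \<in> {1..K} \<Longrightarrow> p (sstar S I N th i) = pstar S I N th i"
        using p_own pstar_eq K1 sstar_eq by auto
      have A: "\<forall>i\<in>{1..K}. sstar S I N th i \<ge> 0
                      \<and> (\<forall>s\<ge>0. surplus (th i) p s \<le> surplus (th i) p (sstar S I N th i))
                      \<and> p (sstar S I N th i) = pstar S I N th i"
      proof
        fix i assume i: "i \<in> {1..K}"
        have "surplus (th i) p (sstar S I N th i) = th i * ln (x i) - (lm * x i) * (x i - 1)"
          unfolding surplus_def sstar_eq using p_own[OF i] by simp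
        thus "sstar S I N th i \<ge> 0
                      \<and> (\<forall>s\<ge>0. surplus (th i) p s \<le> surplus (th i) p (sstar S I N th i))
                      \<and> p (sstar S I N th i) = pstar S I N th i"
          using opt[OF i] pi[OF i] xgt1[OF i] sstar_eq by auto
      qed
      have B: "(\<Sum>i=1..K. real (N i) * p (sstar S I N th i) * sstar S I N th i)
                    = (\<Sum>i=1..K. real (N i) * pstar S I N th i * sstar S I N th i)"
        using pi by (intro sum.cong) auto
      show "let p = menu_price K sth (pstar S I N th) in
                    (\<forall>i\<in>{1..K}.
                        sstar S I N th i \<ge> 0
                      \<and> (\<forall>s\<ge>0. surplus (th i) p s \<le> surplus (th i) p (sstar S I N th i))
                      \<and> p (sstar S I N th i) = pstar S I N th i)
                  \<and> (\<Sum>i=1..K. real (N i) * p (sstar S I N th i) * sstar S I N th i)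
                    = (\<Sum>i=1..K. real (N i) * pstar S I N th i * sstar S I N th i)"
        using A B unfolding p_def Let_def by blast
    qed
  qed
  show ?thesis using conj1 conj2 unfolding K_def Let_def by blast
qed

end
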